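(* Let $Q$ be a compact metric space, $Q_0\subset Q$ open, $Q_1=Q\setminus Q_0$, $p_0:Q_0\to[0,+\infty)$ lower semicontinuous, $c:Q\times Q\to[0,+\infty)$ continuous with $c(x,x)=0$ for all $x$, and $f$ a nonnegative Radon measure on $Q$ of positive mass. Let $\mathcal A=\{p:Q\to\mathbb{R}\ :\ p=p_0\text{ on }Q_0,\ p\text{ lower semicontinuous on }Q\}$. Let $p\in\mathcal A$ with $p\ge0$, set $w=w_p$, define $\tilde u(y)=\inf_{x\in Q}\{c(x,y)-w(x)\}$ for $y\in Q_1$, and $\tilde p=p_0$ on $Q_0$, $\tilde p=-\tilde u$ on $Q_1$. Then (i) $v_{\tilde p}=v_p$, $\tilde p\le p$ on $Q_1$, and $\tilde p\ge0$ on $Q$; (ii) $T_p(x)\cap Q_1\subset T_{\tilde p}(x)\cap Q_1$ for all $x\in\Omega_1(p)$; (iii) $\Omega_1(p)\subset\Omega_1(\tilde p)=\{w\le v_0\}$; (iv) $T_{\tilde p}(x)\cap Q_1=\partial^{1,c}w(x)$ for all $x\in\Omega_1(\tilde p)$; and consequently $\Pi(\tilde p)\ge\Pi(p)$ and $$\Pi(\tilde p)=\int_{\{w\le v_0\}}\Big(w(x)-\min_{y\in\partial^{1,c}w(x)}c(x,y)\Big)\,df(x).$$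
   Context: For $p\in\mathcal A$ and $x\in Q$: $v_p(x)=\min_{y\in Q}\{c(x,y)+p(y)\}$, $T_p(x)=\{y\in Q: c(x,y)+p(y)=v_p(x)\}$, $v_0(x)=\inf_{y\in Q_0}\{c(x,y)+p_0(y)\}$, $w_p(x)=\inf_{y\in Q_1}\{c(x,y)+p(y)\}$ (so $v_p=\min(v_0,w_p)$). $\Omega_1(p)=\{x\in Q: T_p(x)\cap Q_1\ne\emptyset\}$. The profit is $\Pi(p)=\int_{\Omega_1(p)}\big(\max_{y\in T_p(x)\cap Q_1}p(y)\big)\,df(x)$. For a function $w$ of the form $w(x)=\inf_{y\in Q_1}\{c(x,y)-u(y)\}$ with $u:Q_1\to\mathbb{R}$ bounded above (called $(Q_1,c)$-concave), $w^c(y)=\inf_{x\in Q}\{c(x,y)-w(x)\}$ for $y\in Q_1$, and $\partial^{1,c}w(x)=\{y\in Q_1: w(x)+w^c(y)=c(x,y)\}$. *)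

theory Defs
  imports "HOL-Analysis.Analysis"
begin

text \<open>Setting: the compact metric space Q is the whole (compact) type 'a; Q0 is an open
  subset and Q1 = - Q0. Infima are taken in ereal so that an infimum over an empty set is
  +infinity, as in the paper.\<close>

definition lsc_on :: "'a::topological_space set \<Rightarrow> ('a \<Rightarrow> real) \<Rightarrow> bool" where
  "lsc_on S g \<longleftrightarrow> (\<forall>x\<in>S. \<forall>t. t < g x \<longrightarrow> (\<forall>\<^sub>F y in at x within S. t < g y))"

definition vfun :: "('a \<Rightarrow> 'a \<Rightarrow> real) \<Rightarrow> ('a \<Rightarrow> real) \<Rightarrow> 'a \<Rightarrow> ereal" where
  "vfun c p x = (INF y. ereal (c x y + p y))"

definition Tset :: "('a \<Rightarrow> 'a \<Rightarrow> real) \<Rightarrow> ('a \<Rightarrow> real) \<Rightarrow> 'a \<Rightarrow> 'a set" where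
  "Tset c p x = {y. ereal (c x y + p y) = vfun c p x}"

definition v0fun :: "('a \<Rightarrow> 'a \<Rightarrow> real) \<Rightarrow> 'a set \<Rightarrow> ('a \<Rightarrow> real) \<Rightarrow> 'a \<Rightarrow> ereal" where
  "v0fun c Q0 p0 x = (INF y\<in>Q0. ereal (c x y + p0 y))"

definition wfun :: "('a \<Rightarrow> 'a \<Rightarrow> real) \<Rightarrow> 'a set \<Rightarrow> ('a \<Rightarrow> real) \<Rightarrow> 'a \<Rightarrow> ereal" where
  "wfun c Q0 p x = (INF y\<in>- Q0. ereal (c x y + p y))"

definition Omega1 :: "('a \<Rightarrow> 'a \<Rightarrow> real) \<Rightarrow> 'a set \<Rightarrow> ('a \<Rightarrow> real) \<Rightarrow> 'a set" where
  "Omega1 c Q0 p = {x. Tset c p x \<inter> - Q0 \<noteq> {}}"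

definition Profit :: "('a \<Rightarrow> 'a \<Rightarrow> real) \<Rightarrow> 'a set \<Rightarrow> 'a measure \<Rightarrow> ('a \<Rightarrow> real) \<Rightarrow> real" where
  "Profit c Q0 f p = (LINT x:Omega1 c Q0 p|f. Sup (p ` (Tset c p x \<inter> - Q0)))"

definition cconj :: "('a \<Rightarrow> 'a \<Rightarrow> real) \<Rightarrow> ('a \<Rightarrow> ereal) \<Rightarrow> 'a \<Rightarrow> ereal" where
  "cconj c w y = (INF x. ereal (c x y) - w x)"

definition csubdiff :: "('a \<Rightarrow> 'a \<Rightarrow> real) \<Rightarrow> 'a set \<Rightarrow> ('a \<Rightarrow> ereal) \<Rightarrow> 'a \<Rightarrow> 'a set" where
  "csubdiff c Q0 w x = {y\<in>- Q0. w x + cconj c w y = ereal (c x y)}"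

definition ptilde :: "('a \<Rightarrow> 'a \<Rightarrow> real) \<Rightarrow> 'a set \<Rightarrow> ('a \<Rightarrow> real) \<Rightarrow> ('a \<Rightarrow> real) \<Rightarrow> 'a \<Rightarrow> real" where
  "ptilde c Q0 p0 p y = (if y \<in> Q0 then p0 y else - real_of_ereal (cconj c (wfun c Q0 p) y))"

end

theory Submission
  imports Defs
begin


lemma unif_c1:
  fixes c :: "'a::metric_space \<Rightarrow> 'a \<Rightarrow> real"
  assumes "compact (UNIV::'a set)" "continuous_on UNIV (\<lambda>(x,y). c x y)"
  shows "\<forall>e>0. \<exists>d>0. \<forall>x x' y. dist x x' < d \<longrightarrow> \<bar>c x y - c x' y\<bar> < e"
    and "\<forall>e>0. \<exists>d>0. \<forall>x x' y. dist x x' < d \<longrightarrow> \<bar>c y x - c y x'\<bar> < e"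
proof -
  have "compact (UNIV::('a\<times>'a) set)"
    using compact_Times[OF assms(1) assms(1)] by simp
  then have u: "uniformly_continuous_on UNIV (\<lambda>(x,y). c x y)"
    using assms(2) compact_uniformly_continuous by blast
  show "\<forall>e>0. \<exists>d>0. \<forall>x x' y. dist x x' < d \<longrightarrow> \<bar>c x y - c x' y\<bar> < e"
  proof (intro allI impI)
    fix e :: real assume "e > 0"
    then obtain d where d: "d > 0" "\<forall>z z'::'a\<times>'a. dist z' z < d \<longrightarrow> dist ((\<lambda>(x,y). c x y) z') ((\<lambda>(x,y). c x y) z) < e"
      using u unfolding uniformly_continuous_on_def by blast
    show "\<exists>d>0. \<forall>x x' y. dist x x' < d \<longrightarrow> \<bar>c x y - c x' y\<bar> < e"
    proof (intro exI[of _ d] conjI allI impI)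
      fix x x' y :: 'a assume "dist x x' < d"
      then have "dist (x,y) (x',y) < d" by (simp add: dist_Pair_Pair)
      then show "\<bar>c x y - c x' y\<bar> < e" using d(2)[rule_format, of "(x',y)" "(x,y)"]
        by (simp add: dist_real_def dist_commute abs_minus_commute)
    qed (use d in auto)
  qed
  show "\<forall>e>0. \<exists>d>0. \<forall>x x' y. dist x x' < d \<longrightarrow> \<bar>c y x - c y x'\<bar> < e"
  proof (intro allI impI)
    fix e :: real assume "e > 0"
    then obtain d where d: "d > 0" "\<forall>z z'::'a\<times>'a. dist z' z < d \<longrightarrow> dist ((\<lambda>(x,y). c x y) z') ((\<lambda>(x,y). c x y) z) < e"
      using u unfolding uniformly_continuous_on_def by blast
    show "\<exists>d>0. \<forall>x x' y. dist x x' < d \<longrightarrow> \<bar>c y x - c y x'\<bar> < e"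
    proof (intro exI[of _ d] conjI allI impI)
      fix x x' y :: 'a assume "dist x x' < d"
      then have "dist (y,x) (y,x') < d" by (simp add: dist_Pair_Pair)
      then show "\<bar>c y x - c y x'\<bar> < e" using d(2)[rule_format, of "(y,x')" "(y,x)"]
        by (simp add: dist_real_def dist_commute abs_minus_commute)
    qed (use d in auto)
  qed
qed

lemma cont_Inf:
  fixes h :: "'a::metric_space \<Rightarrow> 'b \<Rightarrow> real"
  assumes eq: "\<forall>e>0. \<exists>d>0. \<forall>x x' y. dist x x' < d \<longrightarrow> \<bar>h x y - h x' y\<bar> < e"
    and ne: "A \<noteq> {}" and bd: "\<forall>x. \<forall>y\<in>A. B \<le> h x y"
  shows "continuous_on UNIV (\<lambda>x. Inf ((\<lambda>y. h x y) ` A))"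
  unfolding continuous_on_iff
proof (intro ballI allI impI)
  fix x e assume "(e::real) > 0"
  then obtain d where d: "d > 0" "\<forall>x x' y. dist x x' < d \<longrightarrow> \<bar>h x y - h x' y\<bar> < e/2"
    using eq[rule_format, of "e/2"] by auto
  have bb: "bdd_below ((\<lambda>y. h z y) ` A)" for z by (rule bdd_belowI2[where m=B]) (use bd in auto)
  have key: "Inf ((\<lambda>y. h a y) ` A) \<le> Inf ((\<lambda>y. h b y) ` A) + e/2" if "dist a b < d" for a b
  proof -
    have "Inf ((\<lambda>y. h a y) ` A) - e/2 \<le> Inf ((\<lambda>y. h b y) ` A)"
    proof (rule cINF_greatest[OF ne])
      fix y assume y: "y \<in> A"
      have "Inf ((\<lambda>y. h a y) ` A) \<le> h a y" using y bb by (auto intro: cINF_lower)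
      moreover have "\<bar>h a y - h b y\<bar> < e/2" using d(2) that by blast
      then have "h a y < h b y + e/2" by linarith
      ultimately show "Inf ((\<lambda>y. h a y) ` A) - e/2 \<le> h b y" by linarith
    qed
    then show ?thesis by linarith
  qed
  show "\<exists>d>0. \<forall>x'\<in>UNIV. dist x' x < d \<longrightarrow> dist (Inf ((\<lambda>y. h x' y) ` A)) (Inf ((\<lambda>y. h x y) ` A)) < e"
  proof (intro exI[of _ d] conjI ballI impI)
    fix x' assume "dist x' x < d"
    then have "dist x x' < d" by (simp add: dist_commute)
    from key[OF \<open>dist x' x < d\<close>] key[OF this] \<open>e > 0\<close>
    show "dist (Inf ((\<lambda>y. h x' y) ` A)) (Inf ((\<lambda>y. h x y) ` A)) < e"
      by (simp add: dist_real_def abs_less_iff)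
  qed (use d in auto)
qed

lemma lsc_min:
  fixes g :: "'a::topological_space \<Rightarrow> real"
  assumes S: "compact S" "S \<noteq> {}"
    and lsc: "\<forall>y\<in>S. \<forall>t. t < g y \<longrightarrow> (\<forall>\<^sub>F z in at y. t < g z)"
    and bd: "\<forall>y\<in>S. B \<le> g y"
  shows "\<exists>y\<in>S. \<forall>z\<in>S. g y \<le> g z"
proof (rule ccontr)
  assume no: "\<not> ?thesis"
  define m where "m = Inf (g ` S)"
  have bb: "bdd_below (g ` S)" using bd by (auto intro: bdd_belowI2)
  have gt: "m < g y" if "y \<in> S" for y
  proof -
    have "\<exists>z\<in>S. g z < g y" using no that by (meson not_le)
    then obtain z where z: "z \<in> S" "g z < g y" by blast
    have "m \<le> g z" unfolding m_def using z bb by (auto intro: cINF_lower)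
    then show ?thesis using z by linarith
  qed
  have "\<exists>U. open U \<and> y \<in> U \<and> (\<forall>z\<in>U. (m + g y)/2 < g z)" if "y \<in> S" for y
  proof -
    have "(m + g y)/2 < g y" using gt[OF that] by simp
    then have ev: "\<forall>\<^sub>F z in at y. (m + g y)/2 < g z" using lsc that by blast
    then obtain U where U: "open U" "y \<in> U" "\<forall>z\<in>U. z \<noteq> y \<longrightarrow> (m + g y)/2 < g z"
      unfolding eventually_at_topological by blast
    then show ?thesis using \<open>(m + g y)/2 < g y\<close> by (intro exI[of _ U]) auto
  qed
  then obtain U where U: "\<And>y. y \<in> S \<Longrightarrow> open (U y) \<and> y \<in> U y \<and> (\<forall>z\<in>U y. (m + g y)/2 < g z)"
    by metis
  obtain D where D: "D \<subseteq> S" "finite D" "S \<subseteq> (\<Union>y\<in>D. U y)"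
    using compactE_image[OF S(1), of S U] U by blast
  have "D \<noteq> {}" using D S(2) by auto
  define t where "t = Min ((\<lambda>y. (m + g y)/2) ` D)"
  have tm: "m < t" unfolding t_def using D \<open>D \<noteq> {}\<close> gt by (subst Min_gr_iff) auto
  have "t \<le> m" unfolding m_def
  proof (rule cINF_greatest[OF S(2)])
    fix z assume "z \<in> S"
    then obtain y where y: "y \<in> D" "z \<in> U y" using D by auto
    then have "(m + g y)/2 < g z" using U D by blast
    moreover have "t \<le> (m + g y)/2" unfolding t_def using y D by (intro Min_le) auto
    ultimately show "t \<le> g z" by linarith
  qed
  then show False using tm by linarith
qed



theorem proposition5p2:
  fixes c :: "'a::metric_space \<Rightarrow> 'a \<Rightarrow> real"
    and Q0 :: "'a set" and p0 p :: "'a \<Rightarrow> real" and f :: "'a measure"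
  assumes Q_compact: "compact (UNIV :: 'a set)"
    and Q0_open: "open Q0"
    and p0_nonneg: "\<forall>x\<in>Q0. p0 x \<ge> 0"
    and p0_lsc: "lsc_on Q0 p0"
    and c_cont: "continuous_on UNIV (\<lambda>(x, y). c x y)"
    and c_nonneg: "\<forall>x y. c x y \<ge> 0"
    and c_diag: "\<forall>x. c x x = 0"
    and f_borel: "sets f = sets borel"
    and f_finite: "finite_measure f"
    and f_pos: "emeasure f (space f) > 0"
    and p_A: "\<forall>x\<in>Q0. p x = p0 x" "lsc_on UNIV p"
    and p_nonneg: "\<forall>x. p x \<ge> 0"
  shows "vfun c (ptilde c Q0 p0 p) = vfun c p
       \<and> (\<forall>y\<in>- Q0. ptilde c Q0 p0 p y \<le> p y)
       \<and> (\<forall>y. ptilde c Q0 p0 p y \<ge> 0)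
       \<and> (\<forall>x\<in>Omega1 c Q0 p. Tset c p x \<inter> - Q0 \<subseteq> Tset c (ptilde c Q0 p0 p) x \<inter> - Q0)
       \<and> Omega1 c Q0 p \<subseteq> Omega1 c Q0 (ptilde c Q0 p0 p)
       \<and> Omega1 c Q0 (ptilde c Q0 p0 p) = {x. wfun c Q0 p x \<le> v0fun c Q0 p0 x}
       \<and> (\<forall>x\<in>Omega1 c Q0 (ptilde c Q0 p0 p).
            Tset c (ptilde c Q0 p0 p) x \<inter> - Q0 = csubdiff c Q0 (wfun c Q0 p) x)
       \<and> Profit c Q0 f (ptilde c Q0 p0 p) \<ge> Profit c Q0 f p
       \<and> Profit c Q0 f (ptilde c Q0 p0 p) =
           (LINT x:{x. wfun c Q0 p x \<le> v0fun c Q0 p0 x}|f.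
              real_of_ereal (wfun c Q0 p x) - Inf ((\<lambda>y. c x y) ` csubdiff c Q0 (wfun c Q0 p) x))"
proof (cases "Q0 = UNIV")
  case True
  have pt: "ptilde c Q0 p0 p = p" using p_A(1) True by (auto simp: ptilde_def fun_eq_iff)
  have Om: "Omega1 c Q0 q = {}" for q using True by (auto simp: Omega1_def)
  have w: "wfun c Q0 p x = \<infinity>" for x using True by (simp add: wfun_def top_ereal_def)
  have le: "v0fun c Q0 p0 x \<le> ereal (c x x + p0 x)" for x
    unfolding v0fun_def using True by (intro INF_lower) auto
  have nle: "\<not> (\<infinity> \<le> v0fun c Q0 p0 x)" for x
    using le[of x] by (cases "v0fun c Q0 p0 x") auto
  have v0: "{x. wfun c Q0 p x \<le> v0fun c Q0 p0 x} = {}" unfolding w using nle by blast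
  have P0: "Profit c Q0 f q = 0" for q unfolding Profit_def Om by (simp add: set_lebesgue_integral_def)
  show ?thesis unfolding pt v0 P0 Om
  proof (intro conjI)
    show "\<forall>y. 0 \<le> p y" using p_nonneg by blast
  qed (auto simp: True set_lebesgue_integral_def)
next
  case False
  define Q1 where "Q1 = - Q0"
  obtain y1 where y1: "y1 \<in> Q1" using False Q1_def by auto
  have Q1c: "compact Q1" unfolding Q1_def
    using compact_Int_closed[OF Q_compact, of "-Q0"] Q0_open by (simp add: closed_def)
  have Q1cl: "closed Q1" unfolding Q1_def using Q0_open by (simp add: closed_def)
  have UU: "compact (UNIV::('a\<times>'a) set)" using compact_Times[OF Q_compact Q_compact] by simp
  have cz: "continuous_on UNIV (\<lambda>z. c (fst z) (snd z))"
    using c_cont by (simp add: case_prod_beta')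
  obtain z0 where z0: "\<forall>z. c (fst z) (snd z) \<le> c (fst z0) (snd z0)"
    using continuous_attains_sup[OF UU UNIV_not_empty cz] by blast
  define M where "M = c (fst z0) (snd z0)"
  have cM: "c x y \<le> M" for x y using z0[rule_format, of "(x,y)"] by (simp add: M_def)
  have M0: "0 \<le> M" using c_nonneg[rule_format, of y1 y1] cM[of y1 y1] by linarith
  have cx_cont: "continuous_on UNIV (\<lambda>y. c x y)" for x
  proof -
    have "continuous_on UNIV (\<lambda>y. (x,y))" by (intro continuous_intros)
    from continuous_on_compose2[OF cz this subset_UNIV] show ?thesis by simp
  qed
  have uc1: "\<forall>e>0. \<exists>d>0. \<forall>x x' y. dist x x' < d \<longrightarrow> \<bar>c x y - c x' y\<bar> < e"
    and uc2: "\<forall>e>0. \<exists>d>0. \<forall>x x' y. dist x x' < d \<longrightarrow> \<bar>c y x - c y x'\<bar> < e"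
    using unif_c1[OF Q_compact c_cont] by auto
  define W where "W x = Inf ((\<lambda>y. c x y + p y) ` Q1)" for x
  have bdW: "bdd_below ((\<lambda>y. c x y + p y) ` Q1)" for x
    by (rule bdd_belowI2[where m=0]) (use c_nonneg p_nonneg in \<open>auto intro: add_nonneg_nonneg\<close>)
  have W_le: "y \<in> Q1 \<Longrightarrow> W x \<le> c x y + p y" for x y
    unfolding W_def using bdW by (auto intro: cINF_lower)
  have W_nonneg: "0 \<le> W x" for x
    unfolding W_def using y1 c_nonneg p_nonneg by (intro cINF_greatest) (auto intro: add_nonneg_nonneg)
  have W_M: "W x \<le> M + p y1" for x using W_le[OF y1, of x] cM[of x y1] by linarith
  have W_att: "\<exists>y\<in>Q1. W x = c x y + p y" for x
  proof -
    have lsc: "\<forall>y\<in>Q1. \<forall>t. t < c x y + p y \<longrightarrow> (\<forall>\<^sub>F z in at y. t < c x z + p z)"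
    proof (intro ballI allI impI)
      fix y t assume "y \<in> Q1" "t < c x y + p y"
      define d where "d = (c x y + p y - t)/2"
      have d: "d > 0" using \<open>t < c x y + p y\<close> by (simp add: d_def)
      have "\<forall>\<^sub>F z in at y. p y - d < p z"
        using p_A(2) d unfolding lsc_on_def by auto
      moreover have "((\<lambda>y. c x y) \<longlongrightarrow> c x y) (at y)"
        using cx_cont[of x] by (simp add: continuous_on_def)
      then have "\<forall>\<^sub>F z in at y. c x y - d < c x z"
        using d by (intro order_tendstoD) auto
      moreover have dd: "t = c x y + p y - 2*d" by (simp add: d_def field_simps)
      ultimately show "\<forall>\<^sub>F z in at y. t < c x z + p z"
        by (auto elim: eventually_mono[OF eventually_conj] simp: dd)
    qed
    obtain y where y: "y \<in> Q1" "\<forall>z\<in>Q1. c x y + p y \<le> c x z + p z"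
      using lsc_min[OF Q1c _ lsc, of 0] y1 c_nonneg p_nonneg by (auto intro: add_nonneg_nonneg)
    have "c x y + p y \<le> W x" unfolding W_def using y y1 by (intro cINF_greatest) auto
    then have "W x = c x y + p y" using W_le[OF y(1), of x] by linarith
    then show ?thesis using y(1) by blast
  qed
  have wfun_eq: "wfun c Q0 p x = ereal (W x)" for x
  proof -
    have "ereal (W x) = (INF a\<in>(\<lambda>y. c x y + p y) ` Q1. ereal a)"
      unfolding W_def using y1 bdW by (intro ereal_Inf') auto
    then show ?thesis by (simp add: wfun_def Q1_def image_image)
  qed
  define V where "V x = Inf ((\<lambda>y. c x y + p y) ` UNIV)" for x
  have bdV: "bdd_below ((\<lambda>y. c x y + p y) ` UNIV)" for x
    by (rule bdd_belowI2[where m=0]) (use c_nonneg p_nonneg in \<open>auto intro: add_nonneg_nonneg\<close>)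
  have vfun_eq: "vfun c p x = ereal (V x)" for x
  proof -
    have "ereal (V x) = (INF a\<in>(\<lambda>y. c x y + p y) ` UNIV. ereal a)"
      unfolding V_def using bdV by (intro ereal_Inf') auto
    then show ?thesis by (simp add: vfun_def image_image)
  qed
  have V_cont: "continuous_on UNIV V" unfolding V_def
    by (rule cont_Inf[where B=0]) (use uc1 c_nonneg p_nonneg in \<open>auto intro: add_nonneg_nonneg\<close>)
  define Wc where "Wc y = Inf ((\<lambda>x. c x y - W x) ` UNIV)" for y
  have lowb: "-(M + p y1) \<le> c x y - W x" for x y
    using W_M[of x] c_nonneg[rule_format, of x y] by linarith
  have bdWc: "bdd_below ((\<lambda>x. c x y - W x) ` UNIV)" for y
    by (rule bdd_belowI2[where m="-(M + p y1)"]) (rule lowb)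
  have cconj_eq: "cconj c (wfun c Q0 p) y = ereal (Wc y)" for y
  proof -
    have "ereal (Wc y) = (INF a\<in>(\<lambda>x. c x y - W x) ` UNIV. ereal a)"
      unfolding Wc_def using bdWc by (intro ereal_Inf') auto
    then show ?thesis by (simp add: cconj_def wfun_eq image_image)
  qed
  have Wc_cont: "continuous_on UNIV Wc" unfolding Wc_def
  proof (rule cont_Inf[where B="-(M + p y1)"])
    show "\<forall>e>0. \<exists>d>0. \<forall>x x' y. dist x x' < d \<longrightarrow> \<bar>c y x - W y - (c y x' - W y)\<bar> < e"
      using uc2 by simp
  qed (use lowb in auto)
  have Wc_le: "Wc y \<le> c x y - W x" for x y
    unfolding Wc_def using bdWc by (auto intro: cINF_lower)
  have Wc_ge: "y \<in> Q1 \<Longrightarrow> - p y \<le> Wc y" for y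
    unfolding Wc_def
  proof (rule cINF_greatest)
    fix x assume "y \<in> Q1" show "- p y \<le> c x y - W x" using W_le[OF \<open>y \<in> Q1\<close>, of x] by linarith
  qed simp
  have Wc_ge2: "- (M + p y1) \<le> Wc y" for y
    unfolding Wc_def
  proof (rule cINF_greatest)
    fix x show "- (M + p y1) \<le> c x y - W x" by (rule lowb)
  qed simp
  have Wc_np: "Wc y \<le> - W y" for y using Wc_le[of y y] c_diag by simp
  define pt where "pt = ptilde c Q0 p0 p"
  have pt_Q1: "y \<in> Q1 \<Longrightarrow> pt y = - Wc y" for y
    by (simp add: pt_def ptilde_def Q1_def cconj_eq)
  have pt_Q0: "y \<in> Q0 \<Longrightarrow> pt y = p y" for y
    using p_A(1) by (simp add: pt_def ptilde_def)
  have pt_le: "pt y \<le> p y" for y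
  proof (cases "y \<in> Q0")
    case True then show ?thesis using pt_Q0 by simp
  next
    case False then have y: "y \<in> Q1" by (simp add: Q1_def)
    show ?thesis using pt_Q1[OF y] Wc_ge[OF y] by linarith
  qed
  have pt_nonneg: "0 \<le> pt y" for y
  proof (cases "y \<in> Q0")
    case True then show ?thesis using pt_Q0 p_nonneg by simp
  next
    case False then have y: "y \<in> Q1" by (simp add: Q1_def)
    show ?thesis using pt_Q1[OF y] Wc_np[of y] W_nonneg[of y] by linarith
  qed
  have vw: "vfun c p x \<le> ereal (W x)" for x
    unfolding wfun_eq[symmetric] vfun_def wfun_def by (rule INF_superset_mono) auto
  have vpt: "vfun c pt = vfun c p"
  proof
    fix x
    have "vfun c pt x \<le> vfun c p x" unfolding vfun_def
    proof (rule INF_mono)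
      fix m show "\<exists>y\<in>UNIV. ereal (c x y + pt y) \<le> ereal (c x m + p m)"
        using pt_le[of m] by (intro bexI[of _ m]) auto
    qed
    moreover have "vfun c p x \<le> vfun c pt x" unfolding vfun_def
    proof (rule INF_greatest)
      fix y
      show "(INF y. ereal (c x y + p y)) \<le> ereal (c x y + pt y)"
      proof (cases "y \<in> Q0")
        case True then show ?thesis using pt_Q0 by (auto intro: INF_lower)
      next
        case False
        then have "y \<in> Q1" by (simp add: Q1_def)
        have "vfun c p x \<le> ereal (W x)" by (rule vw)
        also have "\<dots> \<le> ereal (c x y + pt y)" using Wc_le[of y x] pt_Q1[OF \<open>y \<in> Q1\<close>] by simp
        finally show ?thesis by (simp add: vfun_def)
      qed
    qed
    ultimately show "vfun c pt x = vfun c p x" by (rule antisym)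
  qed
  have vv0: "vfun c p x \<le> v0fun c Q0 p0 x" for x
    unfolding vfun_def v0fun_def
  proof (rule INF_mono)
    fix y assume "y \<in> Q0"
    then show "\<exists>m\<in>UNIV. ereal (c x m + p m) \<le> ereal (c x y + p0 y)"
      using p_A(1) by (intro bexI[of _ y]) auto
  qed
  have v_eqW: "W x \<le> v0fun c Q0 p0 x \<Longrightarrow> vfun c p x = ereal (W x)" for x
  proof (rule antisym[OF vw])
    assume h: "W x \<le> v0fun c Q0 p0 x"
    show "ereal (W x) \<le> vfun c p x" unfolding vfun_def
    proof (rule INF_greatest)
      fix y
      show "ereal (W x) \<le> ereal (c x y + p y)"
      proof (cases "y \<in> Q0")
        case True
        have "v0fun c Q0 p0 x \<le> ereal (c x y + p0 y)" unfolding v0fun_def using True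
          by (rule INF_lower)
        with h have "ereal (W x) \<le> ereal (c x y + p0 y)" by (rule order_trans)
        then show ?thesis using True p_A(1) by simp
      next
        case False then show ?thesis using W_le by (simp add: Q1_def)
      qed
    qed
  qed
  have Tchar: "Tset c pt x \<inter> Q1 = {y\<in>Q1. c x y - Wc y = V x}" for x
    using pt_Q1 by (auto simp: Tset_def vpt vfun_eq)
  have ii: "Tset c p x \<inter> Q1 \<subseteq> Tset c pt x \<inter> Q1" for x
  proof
    fix y assume y: "y \<in> Tset c p x \<inter> Q1"
    then have e: "ereal (c x y + p y) = vfun c p x" by (simp add: Tset_def)
    have a1: "vfun c pt x \<le> ereal (c x y + pt y)" unfolding vfun_def by (rule INF_lower) simp
    have "ereal (c x y + pt y) \<le> ereal (c x y + p y)" using pt_le[of y] by simp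
    then have a2: "ereal (c x y + pt y) \<le> vfun c pt x" using e vpt by simp
    have "ereal (c x y + pt y) = vfun c pt x" using a2 a1 by (rule antisym)
    then show "y \<in> Tset c pt x \<inter> Q1" using y unfolding Tset_def by blast
  qed
  have Om_eq: "Omega1 c Q0 pt = {x. wfun c Q0 p x \<le> v0fun c Q0 p0 x}"
  proof (intro set_eqI iffI)
    fix x assume "x \<in> Omega1 c Q0 pt"
    then obtain y where y: "y \<in> Q1" "ereal (c x y + pt y) = vfun c pt x"
      by (auto simp: Omega1_def Tset_def Q1_def)
    have "ereal (W x) \<le> ereal (c x y + pt y)" using Wc_le[of y x] pt_Q1[OF y(1)] by simp
    also have "\<dots> \<le> v0fun c Q0 p0 x" using y(2) vpt vv0 by simp
    finally show "x \<in> {x. wfun c Q0 p x \<le> v0fun c Q0 p0 x}" by (simp add: wfun_eq)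
  next
    fix x assume "x \<in> {x. wfun c Q0 p x \<le> v0fun c Q0 p0 x}"
    then have h: "W x \<le> v0fun c Q0 p0 x" by (simp add: wfun_eq)
    obtain y where y: "y \<in> Q1" "W x = c x y + p y" using W_att by blast
    have a: "W x \<le> c x y + pt y" using Wc_le[of y x] pt_Q1[OF y(1)] by simp
    have b: "c x y + pt y \<le> W x" using y(2) pt_le[of y] by simp
    have "c x y + pt y = W x" using a b by linarith
    then have "ereal (c x y + pt y) = vfun c pt x" using v_eqW[OF h] vpt by simp
    then show "x \<in> Omega1 c Q0 pt" using y(1) by (auto simp: Omega1_def Tset_def Q1_def)
  qed
  have VW: "V x = W x" if x: "x \<in> Omega1 c Q0 pt" for x
  proof -
    have "wfun c Q0 p x \<le> v0fun c Q0 p0 x" using x Om_eq by blast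
    then have "W x \<le> v0fun c Q0 p0 x" unfolding wfun_eq .
    from v_eqW[OF this] have "ereal (V x) = ereal (W x)" unfolding vfun_eq .
    then show ?thesis by simp
  qed
  have iv: "\<forall>x\<in>Omega1 c Q0 pt. Tset c pt x \<inter> - Q0 = csubdiff c Q0 (wfun c Q0 p) x"
  proof
    fix x assume x: "x \<in> Omega1 c Q0 pt"
    have "csubdiff c Q0 (wfun c Q0 p) x = {y\<in>Q1. ereal (W x) + ereal (Wc y) = ereal (c x y)}"
      unfolding csubdiff_def wfun_eq cconj_eq Q1_def ..
    also have "\<dots> = {y\<in>Q1. c x y - Wc y = V x}" using VW[OF x] by auto
    also have "\<dots> = Tset c pt x \<inter> Q1" using Tchar[of x] by simp
    finally show "Tset c pt x \<inter> - Q0 = csubdiff c Q0 (wfun c Q0 p) x" unfolding Q1_def by simp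
  qed
  have Om_sub: "Omega1 c Q0 p \<subseteq> Omega1 c Q0 pt"
    using ii unfolding Q1_def by (fastforce simp: Omega1_def)
  define Om where "Om = Omega1 c Q0 pt"
  define K where "K x = Sup (pt ` (Tset c pt x \<inter> Q1))" for x
  have Kmax: "\<exists>y0\<in>Tset c pt x \<inter> Q1. K x = - Wc y0 \<and> (\<forall>y\<in>Tset c pt x \<inter> Q1. - Wc y \<le> - Wc y0)"
    if x: "x \<in> Om" for x
  proof -
    let ?S = "Tset c pt x \<inter> Q1"
    have ne: "?S \<noteq> {}" using x by (auto simp: Om_def Omega1_def Q1_def)
    have cl: "closed {y. c x y - Wc y = V x}"
      by (intro closed_Collect_eq continuous_on_diff cx_cont Wc_cont continuous_on_const)
    have "?S = Q1 \<inter> {y. c x y - Wc y = V x}" using Tchar[of x] by auto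
    then have cp: "compact ?S" using compact_Int_closed[OF Q1c cl] by simp
    have cWS: "continuous_on ?S (\<lambda>y. - Wc y)"
      by (rule continuous_on_subset[OF _ subset_UNIV]) (intro continuous_intros Wc_cont)
    obtain y0 where y0: "y0 \<in> ?S" "\<forall>y\<in>?S. - Wc y \<le> - Wc y0"
      using continuous_attains_sup[OF cp ne cWS] by blast
    have im: "pt ` ?S = (\<lambda>y. - Wc y) ` ?S" using pt_Q1 by (intro image_cong) auto
    have "K x = - Wc y0" unfolding K_def im
      by (rule cSup_eq_maximum) (use y0 in auto)
    then show ?thesis using y0 by blast
  qed
  have K_bd: "0 \<le> K x \<and> K x \<le> M + p y1" if x: "x \<in> Om" for x
  proof -
    obtain y0 where y0: "y0 \<in> Tset c pt x \<inter> Q1" "K x = - Wc y0" using Kmax[OF x] by blast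
    have "pt y0 = - Wc y0" using y0(1) pt_Q1 by blast
    then show ?thesis using y0(2) pt_nonneg[of y0] Wc_ge2[of y0] by linarith
  qed
  have K_ge: "pt y \<le> K x" if x: "x \<in> Om" and y: "y \<in> Tset c pt x \<inter> Q1" for x y
  proof -
    obtain y0 where y0: "y0 \<in> Tset c pt x \<inter> Q1" "K x = - Wc y0"
      "\<forall>y\<in>Tset c pt x \<inter> Q1. - Wc y \<le> - Wc y0" using Kmax[OF x] by blast
    have "pt y = - Wc y" using y pt_Q1 by blast
    then show ?thesis using y0 y by auto
  qed
  define G where "G x = indicator Om x *\<^sub>R K x" for x
  have G_nonneg: "0 \<le> G x" for x using K_bd by (simp add: G_def indicator_def)
  have G_bd: "G x \<le> M + p y1" for x
    using K_bd M0 p_nonneg[rule_format, of y1] by (simp add: G_def indicator_def)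
  have G_meas: "G \<in> borel_measurable f"
  proof -
    have cWs: "continuous_on UNIV (\<lambda>z::'a\<times>'a. Wc (snd z))"
    proof -
      have "continuous_on UNIV (\<lambda>z::'a\<times>'a. snd z)" by (intro continuous_intros)
      from continuous_on_compose2[OF Wc_cont this subset_UNIV] show ?thesis .
    qed
    have cVf: "continuous_on UNIV (\<lambda>z::'a\<times>'a. V (fst z))"
    proof -
      have "continuous_on UNIV (\<lambda>z::'a\<times>'a. fst z)" by (intro continuous_intros)
      from continuous_on_compose2[OF V_cont this subset_UNIV] show ?thesis .
    qed
    have cl: "closed {x. a \<le> G x}" for a
    proof (cases "a \<le> 0")
      case True
      have "a \<le> G x" for x using G_nonneg[of x] True by linarith
      then show ?thesis by simp
    next
      case False
      define Sa where "Sa = {z::'a\<times>'a. snd z \<in> Q1 \<and> c (fst z) (snd z) - Wc (snd z) = V (fst z) \<and> a \<le> - Wc (snd z)}"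
      have eqS: "Sa = (UNIV \<times> Q1) \<inter> {z. c (fst z) (snd z) - Wc (snd z) = V (fst z)} \<inter> {z. a \<le> - Wc (snd z)}"
        unfolding Sa_def by auto
      have c1: "closed (UNIV \<times> Q1)" using Q1cl by (simp add: closed_Times)
      have c2: "closed {z::'a\<times>'a. c (fst z) (snd z) - Wc (snd z) = V (fst z)}"
        by (intro closed_Collect_eq continuous_on_diff cz cWs cVf)
      have c3: "closed {z::'a\<times>'a. a \<le> - Wc (snd z)}"
        by (intro closed_Collect_le continuous_on_minus cWs continuous_on_const)
      have "closed Sa" unfolding eqS by (intro closed_Int c1 c2 c3)
      then have "compact (UNIV \<inter> Sa)" by (rule compact_Int_closed[OF UU])
      then have "compact Sa" by simp
      then have "compact (fst ` Sa)" by (intro compact_continuous_image continuous_intros)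
      then have clf: "closed (fst ` Sa)" by (rule compact_imp_closed)
      have "{x. a \<le> G x} = fst ` Sa"
      proof (intro set_eqI iffI)
        fix x assume h: "x \<in> {x. a \<le> G x}"
        have xO: "x \<in> Om"
        proof (rule ccontr)
          assume "x \<notin> Om" then have "G x = 0" by (simp add: G_def)
          with h False show False by simp
        qed
        then have aK: "a \<le> K x" using h by (simp add: G_def)
        obtain y0 where y0: "y0 \<in> Tset c pt x \<inter> Q1" "K x = - Wc y0" using Kmax[OF xO] by blast
        have "y0 \<in> {y\<in>Q1. c x y - Wc y = V x}" using y0(1) Tchar[of x] by simp
        then have "(x,y0) \<in> Sa" using aK y0(2) by (simp add: Sa_def)
        then show "x \<in> fst ` Sa" by force
      next
        fix x assume "x \<in> fst ` Sa"
        then obtain y where y: "(x,y) \<in> Sa" by auto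
        then have "y \<in> {y\<in>Q1. c x y - Wc y = V x}" by (simp add: Sa_def)
        then have yS: "y \<in> Tset c pt x \<inter> Q1" using Tchar[of x] by simp
        then have xO: "x \<in> Om" unfolding Om_def Omega1_def Q1_def by blast
        have "a \<le> - Wc y" using y by (simp add: Sa_def)
        then have "a \<le> pt y" using pt_Q1 yS by simp
        also have "\<dots> \<le> K x" by (rule K_ge[OF xO yS])
        finally show "x \<in> {x. a \<le> G x}" using xO by (simp add: G_def)
      qed
      then show ?thesis using clf by simp
    qed
    have "G \<in> borel_measurable borel" unfolding borel_measurable_iff_ge
    proof
      fix a show "{w \<in> space borel. a \<le> G w} \<in> sets borel" using borel_closed[OF cl[of a]] by simp
    qed
    then show ?thesis by (simp add: measurable_cong_sets[OF f_borel refl])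
  qed
  have G_int: "integrable f G"
    by (rule finite_measure.integrable_const_bound[OF f_finite, where B="M + p y1"])
       (use G_nonneg G_bd G_meas in auto)
  have Ppt: "Profit c Q0 f pt = integral\<^sup>L f G"
    unfolding Profit_def set_lebesgue_integral_def G_def K_def Om_def Q1_def by simp
  have Pp: "Profit c Q0 f p = integral\<^sup>L f (\<lambda>x. indicator (Omega1 c Q0 p) x *\<^sub>R Sup (p ` (Tset c p x \<inter> Q1)))"
    unfolding Profit_def set_lebesgue_integral_def Q1_def by simp
  have mono: "indicator (Omega1 c Q0 p) x *\<^sub>R Sup (p ` (Tset c p x \<inter> Q1)) \<le> G x" for x
  proof (cases "x \<in> Omega1 c Q0 p")
    case False then show ?thesis using G_nonneg by simp
  next
    case True
    then have xO: "x \<in> Om" using Om_sub by (auto simp: Om_def)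
    let ?A = "Tset c p x \<inter> Q1"
    have neA: "?A \<noteq> {}" using True by (auto simp: Omega1_def Q1_def)
    have eqA: "p y = pt y" if "y \<in> ?A" for y
    proof -
      have "y \<in> Tset c pt x" using ii that by blast
      then have "ereal (c x y + pt y) = vfun c p x" by (simp add: Tset_def vpt)
      moreover have "ereal (c x y + p y) = vfun c p x" using that by (simp add: Tset_def)
      ultimately have "ereal (c x y + pt y) = ereal (c x y + p y)" by simp
      then show ?thesis by simp
    qed
    have "p ` ?A = pt ` ?A" by (rule image_cong) (simp_all add: eqA)
    then have "Sup (p ` ?A) = Sup (pt ` ?A)" by simp
    also have "\<dots> \<le> Sup (pt ` (Tset c pt x \<inter> Q1))"
    proof (rule cSup_subset_mono)
      show "pt ` ?A \<noteq> {}" using neA by simp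
      show "bdd_above (pt ` (Tset c pt x \<inter> Q1))"
        by (rule bdd_aboveI2[where M="K x"]) (rule K_ge[OF xO])
      show "pt ` ?A \<subseteq> pt ` (Tset c pt x \<inter> Q1)" using ii by blast
    qed
    finally show ?thesis using True xO by (simp add: G_def K_def)
  qed
  have ineq: "Profit c Q0 f p \<le> Profit c Q0 f pt"
    unfolding Pp Ppt
  proof (rule integral_mono_AE'[OF G_int])
    show "AE x in f. indicator (Omega1 c Q0 p) x *\<^sub>R Sup (p ` (Tset c p x \<inter> Q1)) \<le> G x"
      by (rule AE_I2) (rule mono)
    show "AE x in f. 0 \<le> G x" by (rule AE_I2) (rule G_nonneg)
  qed
  have last: "Profit c Q0 f pt = (LINT x:{x. wfun c Q0 p x \<le> v0fun c Q0 p0 x}|f.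
              real_of_ereal (wfun c Q0 p x) - Inf ((\<lambda>y. c x y) ` csubdiff c Q0 (wfun c Q0 p) x))"
  proof -
    have pw: "G x = indicator Om x *\<^sub>R (real_of_ereal (wfun c Q0 p x) - Inf ((\<lambda>y. c x y) ` csubdiff c Q0 (wfun c Q0 p) x))" for x
    proof (cases "x \<in> Om")
      case False then show ?thesis by (simp add: G_def)
    next
      case True
      obtain y0 where y0: "y0 \<in> Tset c pt x \<inter> Q1" "K x = - Wc y0"
        "\<forall>y\<in>Tset c pt x \<inter> Q1. - Wc y \<le> - Wc y0" using Kmax[OF True] by blast
      have sd: "csubdiff c Q0 (wfun c Q0 p) x = Tset c pt x \<inter> Q1"
        using iv True by (simp add: Om_def Q1_def)
      have VW': "V x = W x" using VW True by (simp add: Om_def)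
      have cy: "c x y = W x + Wc y" if "y \<in> Tset c pt x \<inter> Q1" for y
        using that Tchar[of x] VW' by auto
      have "Inf ((\<lambda>y. c x y) ` (Tset c pt x \<inter> Q1)) = c x y0"
      proof (rule cInf_eq_minimum)
        show "c x y0 \<in> (\<lambda>y. c x y) ` (Tset c pt x \<inter> Q1)" using y0(1) by blast
      next
        fix z assume "z \<in> (\<lambda>y. c x y) ` (Tset c pt x \<inter> Q1)"
        then obtain y where y: "y \<in> Tset c pt x \<inter> Q1" "z = c x y" by blast
        show "c x y0 \<le> z" using y cy[OF y(1)] cy[OF y0(1)] y0(3) by fastforce
      qed
      then show ?thesis using y0 cy[OF y0(1)] True by (simp add: G_def sd wfun_eq)
    qed
    have "integral\<^sup>L f G = integral\<^sup>L f (\<lambda>x. indicator Om x *\<^sub>R (real_of_ereal (wfun c Q0 p x) - Inf ((\<lambda>y. c x y) ` csubdiff c Q0 (wfun c Q0 p) x)))"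
      by (rule arg_cong[where f="integral\<^sup>L f"]) (rule ext, rule pw)
    then show ?thesis unfolding Ppt set_lebesgue_integral_def Om_eq[symmetric] Om_def .
  qed
  show ?thesis unfolding pt_def[symmetric]
    using vpt pt_le pt_nonneg ii[unfolded Q1_def] Om_sub Om_eq iv ineq last by blast
qed
end
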